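(* Let $G$ be a group with finite generating set $S$, Cayley graph $\mathcal G$ with word metric $d$, and $0<\lambda<1$. Let $\xi\in\partial_\lambda G$, let $\gamma$ be a geodesic from $1$ to $\xi$, let $v$ be a vertex on $\gamma$, and set $r=\lambda^{d(1,v)}$. Then: (1) for every $R>0$ there is $C_1=C_1(R,\lambda)>0$ with $\Pi_1(v,R)\subset B_{\rho_\lambda}(\xi,C_1r)$; (2) for every $\kappa>0$ there are $R=R(\kappa)>0$ and $C_2=C_2(\kappa)>0$ such that if $\rho^v_\lambda(1,\xi)\ge\kappa$ then $B_{\rho_\lambda}(\xi,C_2r)\subset\Pi_1(v,R)$.
   Context: Floyd metric: for a basepoint $o\in G$, an edge $e$ of $\mathcal G$ has length $\lambda^{d(o,e)}$ and $\rho^o_\lambda$ is the induced length metric; $\rho_\lambda=\rho^1_\lambda$. $\partial_\lambda G=\overline G_\lambda\setminus G$, where $\overline G_\lambda$ is the Cauchy completion of $(G,\rho_\lambda)$; any two points of $G\cup\partial_\lambda G$ are joined by a (finite, semi-infinite or bi-infinite) geodesic of $\mathcal G$. Shadow: $\Pi_x(y,R)=\{\eta\in\partial_\lambda G:\text{ some geodesic }[x,\eta]\text{ meets }B(y,R)\}$. $B_{\rho_\lambda}(\xi,t)$ is the $\rho_\lambda$-ball in $\partial_\lambda G$. *)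

theory Defs
  imports "HOL-Algebra.Generated_Groups" Complex_Main
begin

definition cay_adj :: "('a, 'b) monoid_scheme \<Rightarrow> 'a set \<Rightarrow> 'a \<Rightarrow> 'a \<Rightarrow> bool" where
  "cay_adj G S x y \<longleftrightarrow> x \<in> carrier G \<and> y \<in> carrier G \<and>
     (\<exists>s\<in>S. y = x \<otimes>\<^bsub>G\<^esub> s \<or> x = y \<otimes>\<^bsub>G\<^esub> s)"

definition cay_walk :: "('a, 'b) monoid_scheme \<Rightarrow> 'a set \<Rightarrow> 'a list \<Rightarrow> bool" where
  "cay_walk G S p \<longleftrightarrow> p \<noteq> [] \<and> set p \<subseteq> carrier G \<and>
     (\<forall>i. Suc i < length p \<longrightarrow> cay_adj G S (p ! i) (p ! Suc i))"

definition word_dist :: "('a, 'b) monoid_scheme \<Rightarrow> 'a set \<Rightarrow> 'a \<Rightarrow> 'a \<Rightarrow> nat" where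
  "word_dist G S x y = (LEAST n. \<exists>p. cay_walk G S p \<and> hd p = x \<and> last p = y \<and> length p = Suc n)"

definition floyd_len :: "('a, 'b) monoid_scheme \<Rightarrow> 'a set \<Rightarrow> real \<Rightarrow> 'a \<Rightarrow> 'a list \<Rightarrow> real" where
  "floyd_len G S lam b p =
     (\<Sum>i < length p - 1. lam ^ min (word_dist G S b (p ! i)) (word_dist G S b (p ! Suc i)))"

definition floyd_dist :: "('a, 'b) monoid_scheme \<Rightarrow> 'a set \<Rightarrow> real \<Rightarrow> 'a \<Rightarrow> 'a \<Rightarrow> 'a \<Rightarrow> real" where
  "floyd_dist G S lam b x y =
     Inf {floyd_len G S lam b p | p. cay_walk G S p \<and> hd p = x \<and> last p = y}"

text \<open>Points of the Cauchy
  completion are represented by Cauchy sequences (modulo the usual equivalence;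
  all notions below are invariant under it).\<close>
definition floyd_cauchy :: "('a, 'b) monoid_scheme \<Rightarrow> 'a set \<Rightarrow> real \<Rightarrow> (nat \<Rightarrow> 'a) \<Rightarrow> bool" where
  "floyd_cauchy G S lam x \<longleftrightarrow> (\<forall>n. x n \<in> carrier G) \<and>
     (\<forall>e>0. \<exists>N. \<forall>m\<ge>N. \<forall>n\<ge>N. floyd_dist G S lam \<one>\<^bsub>G\<^esub> (x m) (x n) < e)"

definition floyd_boundary :: "('a, 'b) monoid_scheme \<Rightarrow> 'a set \<Rightarrow> real \<Rightarrow> (nat \<Rightarrow> 'a) set" where
  "floyd_boundary G S lam = {x. floyd_cauchy G S lam x \<and>
     \<not> (\<exists>g\<in>carrier G. (\<lambda>n. floyd_dist G S lam \<one>\<^bsub>G\<^esub> (x n) g) \<longlonglongrightarrow> 0)}"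

text \<open>Extension of rho^o_lam to the completion (points of G are constant sequences).\<close>
definition floyd_dist_ext :: "('a, 'b) monoid_scheme \<Rightarrow> 'a set \<Rightarrow> real \<Rightarrow> 'a \<Rightarrow> (nat \<Rightarrow> 'a) \<Rightarrow> (nat \<Rightarrow> 'a) \<Rightarrow> real" where
  "floyd_dist_ext G S lam b x y = lim (\<lambda>n. floyd_dist G S lam b (x n) (y n))"

definition geod_ray :: "('a, 'b) monoid_scheme \<Rightarrow> 'a set \<Rightarrow> 'a \<Rightarrow> (nat \<Rightarrow> 'a) \<Rightarrow> bool" where
  "geod_ray G S x \<gamma> \<longleftrightarrow> \<gamma> 0 = x \<and> (\<forall>i. \<gamma> i \<in> carrier G) \<and>
     (\<forall>i j. real (word_dist G S (\<gamma> i) (\<gamma> j)) = \<bar>real i - real j\<bar>)"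

definition geod_to :: "('a, 'b) monoid_scheme \<Rightarrow> 'a set \<Rightarrow> real \<Rightarrow> 'a \<Rightarrow> (nat \<Rightarrow> 'a) \<Rightarrow> (nat \<Rightarrow> 'a) \<Rightarrow> bool" where
  "geod_to G S lam x \<eta> \<gamma> \<longleftrightarrow> geod_ray G S x \<gamma> \<and>
     (\<lambda>n. floyd_dist G S lam \<one>\<^bsub>G\<^esub> (\<gamma> n) (\<eta> n)) \<longlonglongrightarrow> 0"

definition shadow :: "('a, 'b) monoid_scheme \<Rightarrow> 'a set \<Rightarrow> real \<Rightarrow> 'a \<Rightarrow> 'a \<Rightarrow> real \<Rightarrow> (nat \<Rightarrow> 'a) set" where
  "shadow G S lam x y R = {\<eta> \<in> floyd_boundary G S lam.
     \<exists>\<gamma>. geod_to G S lam x \<eta> \<gamma> \<and> (\<exists>i. real (word_dist G S (\<gamma> i) y) \<le> R)}"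

definition floyd_ball :: "('a, 'b) monoid_scheme \<Rightarrow> 'a set \<Rightarrow> real \<Rightarrow> (nat \<Rightarrow> 'a) \<Rightarrow> real \<Rightarrow> (nat \<Rightarrow> 'a) set" where
  "floyd_ball G S lam \<xi> t = {\<eta> \<in> floyd_boundary G S lam.
     floyd_dist_ext G S lam \<one>\<^bsub>G\<^esub> \<xi> \<eta> < t}"

end

theory Submission
  imports Defs "HOL-Library.Infinite_Set"
begin

lemma successively_nth:
  "successively P p \<longleftrightarrow> (\<forall>i. Suc i < length p \<longrightarrow> P (p ! i) (p ! Suc i))"
proof (induction P p rule: successively.induct)
  case (3 P x y xs)
  show ?case
    apply (simp add: 3)
    apply (rule iffI)
     apply clarify
    subgoal for i by (cases i) auto
    apply (intro conjI)
     apply (metis length_Cons nth_Cons_0 nth_Cons_Suc zero_less_Suc)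
    by (metis Suc_less_eq length_Cons nth_Cons_Suc)
qed auto

lemma cay_walk_succ:
  "cay_walk G S p \<longleftrightarrow> p \<noteq> [] \<and> set p \<subseteq> carrier G \<and> successively (cay_adj G S) p"
unfolding cay_walk_def successively_nth by auto


fun pl :: "('a \<Rightarrow> 'a \<Rightarrow> real) \<Rightarrow> 'a list \<Rightarrow> real" where
  "pl g [] = 0"
| "pl g [x] = 0"
| "pl g (x # y # xs) = g x y + pl g (y # xs)"

lemma pl_sum: "(\<Sum>i < length p - 1. g (p ! i) (p ! Suc i)) = pl g p"
proof (induction g p rule: pl.induct)
  case (3 g x y xs)
  have "(\<Sum>i < length (x # y # xs) - 1. g ((x # y # xs) ! i) ((x # y # xs) ! Suc i))
      = (\<Sum>i < Suc (length xs). g ((x # y # xs) ! i) ((x # y # xs) ! Suc i))" by simp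
  also have "\<dots> = g x y + (\<Sum>i < length xs. g ((y # xs) ! i) ((y # xs) ! Suc i))"
    by (subst sum.lessThan_Suc_shift) simp
  finally show ?case using 3 by simp
qed auto

lemma pl_append:
  assumes "p \<noteq> []" "q \<noteq> []" "last p = hd q"
  shows "pl g (p @ tl q) = pl g p + pl g q"
  using assms
proof (induction g p rule: pl.induct)
  case (2 g x)
  then show ?case by (cases q) auto
next
  case (3 g x y xs)
  then show ?case by simp
qed auto

lemma pl_rev:
  assumes "\<And>a b. g a b = g b a"
  shows "pl g (rev p) = pl g p"
  using assms
proof (induction g p rule: pl.induct)
  case (3 g' x y xs)
  have "pl g' (rev (x # y # xs)) = pl g' (rev (y # xs) @ tl [y, x])" by simp
  also have "\<dots> = pl g' (rev (y # xs)) + pl g' [y, x]"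
    by (rule pl_append) auto
  finally show ?case using 3 by (simp add: add.commute)
qed auto

lemma walk_append:
  assumes "cay_walk G S p" "cay_walk G S q" "last p = hd q"
  shows "cay_walk G S (p @ tl q)"
proof -
  have "q = hd q # tl q" using assms(2) by (simp add: cay_walk_def)
  then obtain y q' where q: "q = y # q'" by blast
  have sq: "successively (cay_adj G S) (y # q')" "set q \<subseteq> carrier G"
    using assms(2) q unfolding cay_walk_succ by auto
  then have "successively (cay_adj G S) q'" "q' = [] \<or> cay_adj G S y (hd q')"
    by (auto simp: successively_Cons)
  then show ?thesis using assms q sq(2) unfolding cay_walk_succ
    by (auto simp: successively_append_iff)
qed

lemma walk_rev: "cay_walk G S p \<Longrightarrow> cay_walk G S (rev p)"
  unfolding cay_walk_succ
  by (auto simp: cay_adj_def elim!: successively_mono)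

lemma walk_take: "cay_walk G S p \<Longrightarrow> 0 < n \<Longrightarrow> cay_walk G S (take n p)"
  unfolding cay_walk_def by (auto dest: in_set_takeD)

lemma walk_drop: "cay_walk G S p \<Longrightarrow> n < length p \<Longrightarrow> cay_walk G S (drop n p)"
  unfolding cay_walk_def by (auto dest: in_set_dropD simp: add.commute)

lemma append_ends:
  assumes "p \<noteq> []" "q \<noteq> []" "last p = hd q"
  shows "hd (p @ tl q) = hd p" "last (p @ tl q) = last q" "length (p @ tl q) = length p + length q - 1"
proof -
  obtain y q' where q: "q = y # q'" using assms by (cases q) auto
  show "hd (p @ tl q) = hd p" using assms by simp
  show "last (p @ tl q) = last q" using assms q by (cases "q' = []") auto
  show "length (p @ tl q) = length p + length q - 1" using assms q by simp
qed

lemma abs_geo_aux: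
  fixes \<mu> :: real
  assumes "0 < \<mu>" "\<mu> < 1"
  shows "(\<Sum>t<n. \<mu> ^ nat \<bar>int t - int D\<bar>) \<le> 1 / (1 - \<mu>) + (\<Sum>j<D. \<mu> ^ Suc j)"
proof (induction D arbitrary: n)
  case 0
  have "(\<Sum>t<n. \<mu> ^ t) \<le> 1 / (1 - \<mu>)"
    using assms by (simp add: sum_gp_strict divide_right_mono)
  then show ?case by simp
next
  case (Suc D)
  show ?case
  proof (cases n)
    case 0
    have "0 \<le> (\<Sum>j<Suc D. \<mu> ^ Suc j)" using assms by (intro sum_nonneg) simp
    then show ?thesis using 0 assms by simp
  next
    case (Suc n')
    have "(\<Sum>t<n. \<mu> ^ nat \<bar>int t - int (Suc D)\<bar>) = \<mu> ^ Suc D + (\<Sum>t<n'. \<mu> ^ nat \<bar>int t - int D\<bar>)"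
      unfolding Suc by (subst sum.lessThan_Suc_shift) (simp add: nat_add_distrib)
    also have "\<dots> \<le> \<mu> ^ Suc D + (1 / (1 - \<mu>) + (\<Sum>j<D. \<mu> ^ Suc j))"
      using Suc.IH[of n'] by simp
    finally show ?thesis by simp
  qed
qed

lemma abs_geo:
  fixes \<mu> :: real
  assumes "0 < \<mu>" "\<mu> < 1"
  shows "(\<Sum>t<n. \<mu> ^ nat \<bar>int t - int D\<bar>) \<le> 2 / (1 - \<mu>)"
proof -
  have "(\<Sum>j<D. \<mu> ^ Suc j) \<le> (\<Sum>j<D. \<mu> ^ j)"
    using assms by (intro sum_mono) (simp add: power_decreasing)
  also have "\<dots> \<le> 1 / (1 - \<mu>)" using assms by (simp add: sum_gp_strict divide_right_mono)
  finally show ?thesis using abs_geo_aux[OF assms, of D n] by simp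
qed

locale fl =
  fixes G (structure) and S :: "'a set" and lam :: real
  assumes grp: "group G" and finS: "finite S" and Ssub: "S \<subseteq> carrier G"
    and gen: "generate G S = carrier G" and lam0: "0 < lam" and lam1: "lam < 1"
begin

interpretation group G by (rule grp)

lemma adj_trans:
  assumes "a \<in> carrier G" "cay_adj G S x y" shows "cay_adj G S (a \<otimes> x) (a \<otimes> y)"
proof -
  obtain s where s: "s \<in> S" "y = x \<otimes> s \<or> x = y \<otimes> s" and xy: "x \<in> carrier G" "y \<in> carrier G"
    using assms(2) unfolding cay_adj_def by blast
  have "s \<in> carrier G" using s Ssub by blast
  then show ?thesis unfolding cay_adj_def using s xy assms(1)
    by (intro conjI bexI[of _ s]) (auto simp: m_assoc)
qed

lemma walk_map:
  assumes "a \<in> carrier G" "cay_walk G S p" shows "cay_walk G S (map ((\<otimes>) a) p)"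
  using assms unfolding cay_walk_def by (auto intro: adj_trans)

lemma walk_gen:
  assumes "g \<in> generate G S" shows "\<exists>p. cay_walk G S p \<and> hd p = \<one> \<and> last p = g"
  using assms
proof (induction rule: generate.induct)
  case one
  then show ?case by (intro exI[of _ "[\<one>]"]) (auto simp: cay_walk_def)
next
  case (incl h)
  then have "cay_adj G S \<one> h" using Ssub unfolding cay_adj_def by force
  then show ?case by (intro exI[of _ "[\<one>, h]"]) (auto simp: cay_walk_def cay_adj_def less_Suc_eq)
next
  case (inv h)
  then have "cay_adj G S \<one> (inv h)" using Ssub unfolding cay_adj_def by force
  then show ?case by (intro exI[of _ "[\<one>, inv h]"]) (auto simp: cay_walk_def cay_adj_def less_Suc_eq)
next
  case (eng h1 h2)
  then obtain p q where p: "cay_walk G S p" "hd p = \<one>" "last p = h1"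
    and q: "cay_walk G S q" "hd q = \<one>" "last q = h2" by blast
  have h1: "h1 \<in> carrier G" using p unfolding cay_walk_def by auto
  define q' where "q' = map ((\<otimes>) h1) q"
  have q': "cay_walk G S q'" "hd q' = h1" "last q' = h1 \<otimes> h2"
    using walk_map[OF h1 q(1)] q h1 unfolding q'_def cay_walk_def
    by (auto simp: hd_map last_map)
  show ?case
    apply (intro exI[of _ "p @ tl q'"])
    using walk_append[OF p(1) q'(1)] p q' q'(1)[unfolded cay_walk_def]
    using append_ends[of p q'] by (auto simp: cay_walk_def)
qed

lemma walk_ex:
  assumes "x \<in> carrier G" "y \<in> carrier G"
  shows "\<exists>p. cay_walk G S p \<and> hd p = x \<and> last p = y"
proof -
  obtain p where p: "cay_walk G S p" "hd p = \<one>" "last p = inv x \<otimes> y"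
    using walk_gen[of "inv x \<otimes> y"] gen assms by auto
  show ?thesis
    apply (intro exI[of _ "map ((\<otimes>) x) p"])
    using walk_map[OF assms(1) p(1)] p assms p(1)[unfolded cay_walk_def]
    by (auto simp: hd_map last_map m_assoc[symmetric])
qed

abbreviation d where "d \<equiv> word_dist G S"

lemma d_walk:
  assumes "x \<in> carrier G" "y \<in> carrier G"
  shows "\<exists>p. cay_walk G S p \<and> hd p = x \<and> last p = y \<and> length p = Suc (d x y)"
proof -
  obtain p where "cay_walk G S p \<and> hd p = x \<and> last p = y" using walk_ex[OF assms] by blast
  then have "\<exists>n p. cay_walk G S p \<and> hd p = x \<and> last p = y \<and> length p = Suc n"
    by (metis cay_walk_def length_greater_0_conv Suc_pred)
  then show ?thesis unfolding word_dist_def by (rule LeastI_ex)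
qed

lemma d_le:
  assumes "cay_walk G S p" "hd p = x" "last p = y"
  shows "d x y < length p"
proof -
  have "length p = Suc (length p - 1)" using assms by (simp add: cay_walk_def)
  then have "d x y \<le> length p - 1" unfolding word_dist_def
    by (metis (mono_tags, lifting) Least_le assms)
  then show ?thesis using assms unfolding cay_walk_def by (cases p) auto
qed

lemma d_refl: "x \<in> carrier G \<Longrightarrow> d x x = 0"
proof -
  have "cay_walk G S [x]" if "x \<in> carrier G" using that by (simp add: cay_walk_def)
  then show "x \<in> carrier G \<Longrightarrow> d x x = 0" using d_le[of "[x]" x x] by simp
qed

lemma d_sym:
  assumes "x \<in> carrier G" "y \<in> carrier G" shows "d x y = d y x"
proof -
  have "d y x \<le> d x y" if xy: "x \<in> carrier G" "y \<in> carrier G" for x y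
  proof -
    obtain p where p: "cay_walk G S p" "hd p = x" "last p = y" "length p = Suc (d x y)"
      using d_walk[OF xy] by blast
    have "p \<noteq> []" using p(1) by (simp add: cay_walk_def)
    then have "hd (rev p) = y" "last (rev p) = x" using p by (auto simp: hd_rev last_rev)
    then have "d y x < length (rev p)" using d_le[OF walk_rev[OF p(1)]] by simp
    then show ?thesis using p by simp
  qed
  from this[OF assms] this[OF assms(2) assms(1)] show ?thesis by linarith
qed

lemma d_tri:
  assumes "x \<in> carrier G" "y \<in> carrier G" "z \<in> carrier G"
  shows "d x z \<le> d x y + d y z"
proof -
  obtain p where p: "cay_walk G S p" "hd p = x" "last p = y" "length p = Suc (d x y)"
    using d_walk assms by blast
  obtain q where q: "cay_walk G S q" "hd q = y" "last q = z" "length q = Suc (d y z)"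
    using d_walk assms by blast
  have "hd (p @ tl q) = x" "last (p @ tl q) = z" using p q append_ends[of p q]
    by (auto simp: cay_walk_def)
  then have "d x z < length (p @ tl q)" using d_le walk_append p q by metis
  then show ?thesis using p q by simp
qed

lemma d_adj: "cay_adj G S x y \<Longrightarrow> d x y \<le> 1"
  using d_le[of "[x, y]" x y] by (auto simp: cay_walk_def cay_adj_def less_Suc_eq)

lemma d_one_adj:
  assumes "x \<in> carrier G" "y \<in> carrier G" "d x y = 1" shows "cay_adj G S x y"
proof -
  obtain p where p: "cay_walk G S p" "hd p = x" "last p = y" "length p = 2"
    using d_walk assms by fastforce
  then obtain a b where "p = [a, b]"
    by (metis (no_types, lifting) One_nat_def Suc_length_conv length_0_conv numeral_2_eq_2)
  then show ?thesis using p unfolding cay_walk_def by auto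
qed

lemma d_prefix:
  assumes "cay_walk G S p" "i < length p" shows "d (hd p) (p ! i) \<le> i"
proof -
  have "cay_walk G S (take (Suc i) p)" using walk_take assms by blast
  moreover have "hd (take (Suc i) p) = hd p" using assms
    by (metis cay_walk_def hd_take zero_less_Suc)
  moreover have "last (take (Suc i) p) = p ! i" using assms
    by (simp add: take_Suc_conv_app_nth)
  ultimately show ?thesis using d_le assms by fastforce
qed

abbreviation fd where "fd \<equiv> floyd_dist G S lam"
abbreviation fl where "fl \<equiv> floyd_len G S lam"

lemma fl_pl: "fl b p = pl (\<lambda>a c. lam ^ min (d b a) (d b c)) p"
  unfolding floyd_len_def by (rule pl_sum)

lemma fl_nonneg: "0 \<le> fl b p"
  unfolding floyd_len_def using lam0 by (intro sum_nonneg) simp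

definition LS where "LS b x y = {fl b p | p. cay_walk G S p \<and> hd p = x \<and> last p = y}"

lemma fd_LS: "fd b x y = Inf (LS b x y)"
  unfolding floyd_dist_def LS_def by simp

lemma LS_ne: "x \<in> carrier G \<Longrightarrow> y \<in> carrier G \<Longrightarrow> LS b x y \<noteq> {}"
  unfolding LS_def using walk_ex by blast

lemma LS_bdd: "bdd_below (LS b x y)"
  unfolding LS_def using fl_nonneg by (intro bdd_belowI[of _ 0]) auto

lemma fd_le:
  assumes "cay_walk G S p" "hd p = x" "last p = y"
  shows "fd b x y \<le> fl b p"
  unfolding fd_LS using assms LS_bdd by (intro cInf_lower) (auto simp: LS_def)

lemma fd_nonneg:
  assumes "x \<in> carrier G" "y \<in> carrier G" shows "0 \<le> fd b x y"
  unfolding fd_LS using LS_ne[OF assms] fl_nonneg by (intro cInf_greatest) (auto simp: LS_def)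

lemma fd_greatest:
  assumes "x \<in> carrier G" "y \<in> carrier G"
    and "\<And>p. cay_walk G S p \<Longrightarrow> hd p = x \<Longrightarrow> last p = y \<Longrightarrow> c \<le> fl b p"
  shows "c \<le> fd b x y"
  unfolding fd_LS using LS_ne[OF assms(1,2)] assms(3) by (intro cInf_greatest) (auto simp: LS_def)

lemma fd_refl: "x \<in> carrier G \<Longrightarrow> fd b x x = 0"
  using fd_le[of "[x]" x x b] fd_nonneg[of x x b] by (simp add: cay_walk_def floyd_len_def)

lemma fd_tri:
  assumes "x \<in> carrier G" "y \<in> carrier G" "z \<in> carrier G"
  shows "fd b x z \<le> fd b x y + fd b y z"
proof -
  have "fd b x z - fl b q \<le> fd b x y"
    if q: "cay_walk G S q" "hd q = y" "last q = z" for q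
  proof (rule fd_greatest[OF assms(1,2)])
    fix p assume p: "cay_walk G S p" "hd p = x" "last p = y"
    have ne: "p \<noteq> []" "q \<noteq> []" using p q by (auto simp: cay_walk_def)
    have "fd b x z \<le> fl b (p @ tl q)"
      using fd_le[OF walk_append[OF p(1) q(1)]] append_ends[OF ne] p q by simp
    also have "\<dots> = fl b p + fl b q" unfolding fl_pl using pl_append[OF ne] p q by simp
    finally show "fd b x z - fl b q \<le> fl b p" by simp
  qed
  then have "fd b x z - fd b x y \<le> fd b y z"
    by (intro fd_greatest[OF assms(2,3)]) force
  then show ?thesis by simp
qed

lemma fd_sym:
  assumes "x \<in> carrier G" "y \<in> carrier G" shows "fd b x y = fd b y x"
proof -
  have "fd b y x \<le> fd b x y" if xy: "x \<in> carrier G" "y \<in> carrier G" for x y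
  proof (rule fd_greatest[OF xy])
    fix p assume p: "cay_walk G S p" "hd p = x" "last p = y"
    have ne: "p \<noteq> []" using p by (auto simp: cay_walk_def)
    have "fd b y x \<le> fl b (rev p)"
      using fd_le[OF walk_rev[OF p(1)]] ne p by (simp add: hd_rev last_rev)
    also have "\<dots> = fl b p" unfolding fl_pl by (rule pl_rev) (simp add: min.commute)
    finally show "fd b y x \<le> fl b p" .
  qed
  from this[OF assms] this[OF assms(2) assms(1)] show ?thesis by linarith
qed

lemma fl_base:
  assumes "b \<in> carrier G" "b' \<in> carrier G" "cay_walk G S p"
  shows "lam ^ d b b' * fl b' p \<le> fl b p"
proof -
  have "lam ^ d b b' * lam ^ min (d b' (p ! i)) (d b' (p ! Suc i)) \<le> lam ^ min (d b (p ! i)) (d b (p ! Suc i))"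
    if i: "i < length p - 1" for i
  proof -
    have c: "p ! i \<in> carrier G" "p ! Suc i \<in> carrier G" using assms(3) i
      unfolding cay_walk_def by (auto dest: nth_mem)
    have "min (d b (p ! i)) (d b (p ! Suc i)) \<le> d b b' + min (d b' (p ! i)) (d b' (p ! Suc i))"
      using d_tri[OF assms(1,2) c(1)] d_tri[OF assms(1,2) c(2)] by linarith
    then show ?thesis using lam0 lam1 by (simp add: power_add[symmetric] power_decreasing)
  qed
  then show ?thesis unfolding floyd_len_def sum_distrib_left by (intro sum_mono) auto
qed

lemma fd_base:
  assumes "b \<in> carrier G" "b' \<in> carrier G" "x \<in> carrier G" "y \<in> carrier G"
  shows "lam ^ d b b' * fd b' x y \<le> fd b x y"
proof (rule fd_greatest[OF assms(3,4)])
  fix p assume p: "cay_walk G S p" "hd p = x" "last p = y"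
  have "lam ^ d b b' * fd b' x y \<le> lam ^ d b b' * fl b' p"
    using fd_le[OF p] lam0 by (simp add: mult_left_mono)
  also have "\<dots> \<le> fl b p" by (rule fl_base[OF assms(1,2) p(1)])
  finally show "lam ^ d b b' * fd b' x y \<le> fl b p" .
qed

lemma geom_bound: "(\<Sum>i<n. lam ^ i) \<le> 1 / (1 - lam)"
  using lam0 lam1 by (simp add: sum_gp_strict divide_right_mono)

lemma fl_geo:
  assumes "cay_walk G S p" "\<And>i. i < length p \<Longrightarrow> c + i \<le> d b (p ! i)"
  shows "fl b p \<le> lam ^ c / (1 - lam)"
proof -
  have "fl b p \<le> (\<Sum>i < length p - 1. lam ^ c * lam ^ i)"
    unfolding floyd_len_def
  proof (intro sum_mono)
    fix i assume "i \<in> {..<length p - 1}"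
    then have "c + i \<le> min (d b (p ! i)) (d b (p ! Suc i))" using assms(2)[of i] assms(2)[of "Suc i"]
      by fastforce
    then show "lam ^ min (d b (p ! i)) (d b (p ! Suc i)) \<le> lam ^ c * lam ^ i"
      using lam0 lam1 by (simp add: power_add[symmetric] power_decreasing)
  qed
  also have "\<dots> = lam ^ c * (\<Sum>i < length p - 1. lam ^ i)" by (simp add: sum_distrib_left)
  also have "\<dots> \<le> lam ^ c * (1 / (1 - lam))"
    using geom_bound lam0 by (intro mult_left_mono) auto
  finally show ?thesis by simp
qed

lemma fd_near:
  assumes "b \<in> carrier G" "x \<in> carrier G" "y \<in> carrier G"
  shows "fd b x y \<le> d x y * (lam ^ d b x / lam ^ d x y)"
proof -
  obtain p where p: "cay_walk G S p" "hd p = x" "last p = y" "length p = Suc (d x y)"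
    using d_walk assms(2,3) by blast
  have "fl b p \<le> (\<Sum>i < length p - 1. lam ^ d b x / lam ^ d x y)"
    unfolding floyd_len_def
  proof (intro sum_mono)
    fix i assume i: "i \<in> {..<length p - 1}"
    have c: "p ! i \<in> carrier G" "p ! Suc i \<in> carrier G" using p(1) i
      unfolding cay_walk_def by (auto dest: nth_mem)
    have "d x (p ! i) \<le> d x y" "d x (p ! Suc i) \<le> d x y"
      using d_prefix[OF p(1), of i] d_prefix[OF p(1), of "Suc i"] i p by auto
    then have "d b x \<le> min (d b (p ! i)) (d b (p ! Suc i)) + d x y"
      using d_tri[OF assms(1) c(1) assms(2)] d_tri[OF assms(1) c(2) assms(2)]
        d_sym[OF assms(2) c(1)] d_sym[OF assms(2) c(2)] by linarith
    then have "lam ^ min (d b (p ! i)) (d b (p ! Suc i)) * lam ^ d x y \<le> lam ^ d b x"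
      using lam0 lam1 by (simp add: power_add[symmetric] power_decreasing)
    then show "lam ^ min (d b (p ! i)) (d b (p ! Suc i)) \<le> lam ^ d b x / lam ^ d x y"
      using lam0 by (simp add: pos_le_divide_eq)
  qed
  also have "\<dots> = d x y * (lam ^ d b x / lam ^ d x y)" using p by simp
  finally show ?thesis using fd_le[OF p(1-3), of b] by linarith
qed

lemma ray_carrier: "geod_ray G S x \<alpha> \<Longrightarrow> \<alpha> i \<in> carrier G"
  unfolding geod_ray_def by blast

lemma ray_d: "geod_ray G S x \<alpha> \<Longrightarrow> i \<le> j \<Longrightarrow> d (\<alpha> i) (\<alpha> j) = j - i"
  unfolding geod_ray_def by (metis abs_of_nonpos diff_le_0_iff_le minus_diff_eq of_nat_diff of_nat_eq_iff of_nat_mono)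

lemma ray_d0: "geod_ray G S x \<alpha> \<Longrightarrow> d x (\<alpha> j) = j"
  using ray_d[of x \<alpha> 0 j] unfolding geod_ray_def by auto

lemma ray_walk:
  assumes "geod_ray G S x \<alpha>"
  shows "cay_walk G S (map (\<lambda>k. \<alpha> (i + k)) [0..<Suc m])"
proof -
  have "cay_adj G S (\<alpha> t) (\<alpha> (Suc t))" for t
    using d_one_adj[OF ray_carrier[OF assms] ray_carrier[OF assms]] ray_d[OF assms, of t "Suc t"] by simp
  then show ?thesis unfolding cay_walk_def using ray_carrier[OF assms]
    by (auto simp del: upt_Suc)
qed

lemma ray_seg:
  assumes "geod_ray G S \<one> \<alpha>" "i \<le> n"
  shows "fd \<one> (\<alpha> i) (\<alpha> n) \<le> lam ^ i / (1 - lam)"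
proof -
  let ?p = "map (\<lambda>k. \<alpha> (i + k)) [0..<Suc (n - i)]"
  have "fd \<one> (\<alpha> i) (\<alpha> n) \<le> fl \<one> ?p"
    by (rule fd_le[OF ray_walk[OF assms(1)]]) (use assms(2) in \<open>auto simp: hd_map last_map simp del: upt_Suc\<close>)
  also have "\<dots> \<le> lam ^ i / (1 - lam)"
    by (rule fl_geo[OF ray_walk[OF assms(1)]]) (simp add: ray_d0[OF assms(1)] del: upt_Suc)
  finally show ?thesis .
qed

abbreviation cauchy where "cauchy \<equiv> floyd_cauchy G S lam"

lemma cauchy_carrier: "cauchy x \<Longrightarrow> x n \<in> carrier G"
  unfolding floyd_cauchy_def by blast

lemma fd_conv:
  assumes "cauchy x" "cauchy y" "b \<in> carrier G"
  shows "convergent (\<lambda>n. fd b (x n) (y n))"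
proof -
  have one: "\<one> \<in> carrier G" by simp
  define K where "K = lam ^ d \<one> b"
  have K: "0 < K" unfolding K_def using lam0 by simp
  have base: "fd b u w \<le> fd \<one> u w / K" if "u \<in> carrier G" "w \<in> carrier G" for u w
    using fd_base[OF one assms(3) that] K unfolding K_def by (simp add: pos_le_divide_eq mult.commute)
  have xc: "x n \<in> carrier G" "y n \<in> carrier G" for n using assms cauchy_carrier by blast+
  have diff: "\<bar>fd b (x m) (y m) - fd b (x n) (y n)\<bar> \<le> fd b (x m) (x n) + fd b (y m) (y n)" for m n
  proof -
    have "fd b (x m) (y m) \<le> fd b (x m) (x n) + fd b (x n) (y n) + fd b (y n) (y m)"
      using fd_tri[OF xc(1)[of m] xc(1)[of n] xc(2)[of m], where b=b] fd_tri[OF xc(1)[of n] xc(2)[of n] xc(2)[of m], where b=b]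
      by linarith
    moreover have "fd b (x n) (y n) \<le> fd b (x n) (x m) + fd b (x m) (y m) + fd b (y m) (y n)"
      using fd_tri[OF xc(1)[of n] xc(1)[of m] xc(2)[of n], where b=b] fd_tri[OF xc(1)[of m] xc(2)[of m] xc(2)[of n], where b=b]
      by linarith
    ultimately show ?thesis using fd_sym[OF xc(1)[of m] xc(1)[of n], where b=b] fd_sym[OF xc(2)[of m] xc(2)[of n], where b=b]
      by linarith
  qed
  have "Cauchy (\<lambda>n. fd b (x n) (y n))"
  proof (rule CauchyI)
    fix e :: real assume e: "0 < e"
    then have e': "0 < e * K / 2" using K by simp
    obtain N1 where N1: "\<And>m n. m \<ge> N1 \<Longrightarrow> n \<ge> N1 \<Longrightarrow> fd \<one> (x m) (x n) < e * K / 2"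
      using assms(1) e' unfolding floyd_cauchy_def by meson
    obtain N2 where N2: "\<And>m n. m \<ge> N2 \<Longrightarrow> n \<ge> N2 \<Longrightarrow> fd \<one> (y m) (y n) < e * K / 2"
      using assms(2) e' unfolding floyd_cauchy_def by meson
    show "\<exists>M. \<forall>m\<ge>M. \<forall>n\<ge>M. norm (fd b (x m) (y m) - fd b (x n) (y n)) < e"
    proof (intro exI[of _ "max N1 N2"] allI impI)
      fix m n assume mn: "max N1 N2 \<le> m" "max N1 N2 \<le> n"
      have "fd b (x m) (x n) \<le> fd \<one> (x m) (x n) / K" "fd b (y m) (y n) \<le> fd \<one> (y m) (y n) / K"
        using base xc by auto
      moreover have "fd \<one> (x m) (x n) / K < (e * K / 2) / K" "fd \<one> (y m) (y n) / K < (e * K / 2) / K"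
        using N1[of m n] N2[of m n] mn K by (intro divide_strict_right_mono; simp)+
      moreover have "(e * K / 2) / K = e / 2" using K by simp
      ultimately show "norm (fd b (x m) (y m) - fd b (x n) (y n)) < e"
        using diff[of m n] unfolding real_norm_def by linarith
    qed
  qed
  then show ?thesis by (simp add: Cauchy_convergent_iff)
qed

lemma bdry_cauchy: "\<xi> \<in> floyd_boundary G S lam \<Longrightarrow> cauchy \<xi>"
  unfolding floyd_boundary_def by blast

lemma part1:
  assumes R: "0 < R"
  shows "\<exists>C1>0. \<forall>\<xi> \<gamma> v. \<xi> \<in> floyd_boundary G S lam \<and> geod_to G S lam \<one> \<xi> \<gamma> \<and> v \<in> range \<gamma> \<longrightarrow>
            shadow G S lam \<one> v R \<subseteq> floyd_ball G S lam \<xi> (C1 * lam ^ d \<one> v)"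
proof -
  define M where "M = nat \<lceil>R\<rceil>"
  define K where "K = 1 / (1 - lam) + M / lam ^ M + 1 / (lam ^ M * (1 - lam))"
  have K: "0 \<le> K" unfolding K_def using lam0 lam1 by simp
  show ?thesis
  proof (intro exI[of _ "K + 1"] conjI allI impI subsetI)
    show "0 < K + 1" using K by simp
    fix \<xi> \<gamma> v \<eta>
    assume A: "\<xi> \<in> floyd_boundary G S lam \<and> geod_to G S lam \<one> \<xi> \<gamma> \<and> v \<in> range \<gamma>"
      and \<eta>: "\<eta> \<in> shadow G S lam \<one> v R"
    then obtain j where vj: "v = \<gamma> j" by blast
    have g: "geod_ray G S \<one> \<gamma>" and gl: "(\<lambda>n. fd \<one> (\<gamma> n) (\<xi> n)) \<longlonglongrightarrow> 0"
      using A unfolding geod_to_def by auto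
    obtain \<beta> i where eb: "\<eta> \<in> floyd_boundary G S lam" and b: "geod_ray G S \<one> \<beta>"
      and bl: "(\<lambda>n. fd \<one> (\<beta> n) (\<eta> n)) \<longlonglongrightarrow> 0" and bi: "real (d (\<beta> i) v) \<le> R"
      using \<eta> unfolding shadow_def geod_to_def by blast
    define D where "D = d \<one> v"
    have Dj: "D = j" unfolding D_def vj using ray_d0[OF g] .
    have vc: "v \<in> carrier G" using vj ray_carrier[OF g] by simp
    have xc: "\<xi> n \<in> carrier G" "\<eta> n \<in> carrier G" for n
      using A eb bdry_cauchy cauchy_carrier by blast+
    have gc: "\<gamma> n \<in> carrier G" "\<beta> n \<in> carrier G" for n using ray_carrier g b by blast+
    define e where "e = d (\<beta> i) v"
    have eM: "e \<le> M" unfolding M_def e_def using bi by linarith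
    have lamM: "lam ^ M \<le> lam ^ e" using eM lam0 lam1 by (simp add: power_decreasing)
    have lamM0: "0 < lam ^ M" using lam0 by simp
    have Di: "D \<le> i + e" unfolding D_def e_def
      using d_tri[of \<one> "\<beta> i" v] gc vc ray_d0[OF b, of i] by simp
    have "lam ^ i * lam ^ e \<le> lam ^ D" using Di lam0 lam1 by (simp add: power_add[symmetric] power_decreasing)
    then have "lam ^ i \<le> lam ^ D / lam ^ e" using lam0 by (simp add: pos_le_divide_eq)
    also have "\<dots> \<le> lam ^ D / lam ^ M" using lamM lamM0 lam0 by (intro divide_left_mono) auto
    finally have li: "lam ^ i \<le> lam ^ D / lam ^ M" .
    have near: "fd \<one> v (\<beta> i) \<le> M * (lam ^ D / lam ^ M)"
    proof -
      have "fd \<one> v (\<beta> i) \<le> d v (\<beta> i) * (lam ^ d \<one> v / lam ^ d v (\<beta> i))"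
        using fd_near[OF _ vc gc(2)] by simp
      also have "\<dots> = e * (lam ^ D / lam ^ e)" unfolding e_def D_def using d_sym gc vc by simp
      also have "\<dots> \<le> M * (lam ^ D / lam ^ M)"
        using eM lamM lamM0 lam0 by (intro mult_mono divide_left_mono) auto
      finally show ?thesis .
    qed
    let ?a = "\<lambda>n. fd \<one> (\<xi> n) (\<eta> n)"
    have conv: "convergent ?a" using fd_conv A eb bdry_cauchy by simp
    then obtain L where L: "?a \<longlonglongrightarrow> L" by (auto simp: convergent_def)
    let ?b = "\<lambda>n. fd \<one> (\<gamma> n) (\<xi> n) + fd \<one> (\<beta> n) (\<eta> n) + lam ^ D * K"
    have lb: "?b \<longlonglongrightarrow> 0 + 0 + lam ^ D * K" by (intro tendsto_intros gl bl)
    have "?a n \<le> ?b n" if n: "n \<ge> max i j" for n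
    proof -
      have "?a n \<le> fd \<one> (\<xi> n) (\<gamma> n) + fd \<one> (\<gamma> n) v + fd \<one> v (\<beta> i) + fd \<one> (\<beta> i) (\<beta> n) + fd \<one> (\<beta> n) (\<eta> n)"
        using fd_tri[of "\<xi> n" "\<gamma> n" "\<eta> n" \<one>] fd_tri[of "\<gamma> n" v "\<eta> n" \<one>] fd_tri[of v "\<beta> i" "\<eta> n" \<one>]
          fd_tri[of "\<beta> i" "\<beta> n" "\<eta> n" \<one>] xc[of n] gc[of n] gc[of i] vc by linarith
      moreover have "fd \<one> (\<gamma> n) v \<le> lam ^ D / (1 - lam)"
        using ray_seg[OF g, of j n] n fd_sym[of v "\<gamma> n"] vc gc Dj vj by simp
      moreover have "fd \<one> (\<beta> i) (\<beta> n) \<le> lam ^ D / lam ^ M / (1 - lam)"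
        using order_trans[OF ray_seg[OF b, of i n] divide_right_mono[OF li, of "1 - lam"]] n lam1 by simp
      moreover have "fd \<one> (\<xi> n) (\<gamma> n) = fd \<one> (\<gamma> n) (\<xi> n)" using fd_sym xc gc by blast
      moreover have "lam ^ D * K = lam ^ D / (1 - lam) + M * (lam ^ D / lam ^ M) + lam ^ D / lam ^ M / (1 - lam)"
        unfolding K_def by (simp add: field_simps)
      ultimately show ?thesis using near by linarith
    qed
    then have "L \<le> 0 + 0 + lam ^ D * K" by (intro LIMSEQ_le[OF L lb]) blast
    also have "\<dots> < (K + 1) * lam ^ D" using lam0 by (simp add: algebra_simps)
    finally have "floyd_dist_ext G S lam \<one> \<xi> \<eta> < (K + 1) * lam ^ d \<one> v"
      unfolding floyd_dist_ext_def D_def using limI[OF L] by simp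
    then show "\<eta> \<in> floyd_ball G S lam \<xi> ((K + 1) * lam ^ d \<one> v)"
      unfolding floyd_ball_def using eb by simp
  qed
qed

definition Nbr where "Nbr z = (\<lambda>s. z \<otimes> s) ` S \<union> (\<lambda>s. z \<otimes> inv s) ` S"

lemma finite_Nbr: "finite (Nbr z)"
  unfolding Nbr_def using finS by simp

lemma adj_Nbr: assumes "cay_adj G S z y" shows "y \<in> Nbr z"
proof -
  obtain s where s: "s \<in> S" "y = z \<otimes> s \<or> z = y \<otimes> s" and c: "z \<in> carrier G" "y \<in> carrier G"
    using assms unfolding cay_adj_def by blast
  have sc: "s \<in> carrier G" using s Ssub by blast
  show ?thesis
  proof (cases "y = z \<otimes> s")
    case True then show ?thesis using s unfolding Nbr_def by blast
  next
    case False
    then have "z = y \<otimes> s" using s by blast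
    then have "y = z \<otimes> inv s" using sc c by (simp add: m_assoc)
    then show ?thesis using s unfolding Nbr_def by blast
  qed
qed

lemma d_zero: assumes "x \<in> carrier G" "y \<in> carrier G" "d x y = 0" shows "x = y"
proof -
  obtain p where p: "cay_walk G S p" "hd p = x" "last p = y" "length p = Suc 0"
    using d_walk[OF assms(1,2)] assms(3) by auto
  then obtain a where "p = [a]" by (metis length_0_conv length_Suc_conv)
  then show ?thesis using p by simp
qed

lemma ball_fin: "finite {y \<in> carrier G. d \<one> y \<le> k}"
proof (induction k)
  case 0
  have "{y \<in> carrier G. d \<one> y \<le> 0} \<subseteq> {\<one>}" using d_zero[of \<one>] by auto
  then show ?case by (rule finite_subset) simp
next
  case (Suc k)
  let ?B = "{y \<in> carrier G. d \<one> y \<le> k}"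
  have "{y \<in> carrier G. d \<one> y \<le> Suc k} \<subseteq> ?B \<union> (\<Union>z\<in>?B. Nbr z)"
  proof
    fix y assume y: "y \<in> {y \<in> carrier G. d \<one> y \<le> Suc k}"
    show "y \<in> ?B \<union> (\<Union>z\<in>?B. Nbr z)"
    proof (cases "d \<one> y \<le> k")
      case True then show ?thesis using y by blast
    next
      case False
      then have dy: "d \<one> y = Suc k" using y by simp
      obtain p where p: "cay_walk G S p" "hd p = \<one>" "last p = y" "length p = Suc (Suc k)"
        using d_walk[of \<one> y] y dy by auto
      have zc: "p ! k \<in> carrier G" using p unfolding cay_walk_def by (auto dest: nth_mem)
      have "d \<one> (p ! k) \<le> k" using d_prefix[OF p(1), of k] p by simp
      moreover have "cay_adj G S (p ! k) y"
        using p unfolding cay_walk_def by (metis diff_Suc_1 last_conv_nth lessI list.size(3) nat.distinct(1))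
      ultimately show ?thesis using zc adj_Nbr by blast
    qed
  qed
  moreover have "finite (?B \<union> (\<Union>z\<in>?B. Nbr z))" using Suc finite_Nbr by blast
  ultimately show ?case by (rule finite_subset)
qed

lemma bdry_diverge:
  assumes "\<eta> \<in> floyd_boundary G S lam"
  shows "finite {n. d \<one> (\<eta> n) \<le> k}"
proof (rule ccontr)
  assume inf: "infinite {n. d \<one> (\<eta> n) \<le> k}"
  have c: "cauchy \<eta>" using assms bdry_cauchy by blast
  have "\<eta> ` {n. d \<one> (\<eta> n) \<le> k} \<subseteq> {y \<in> carrier G. d \<one> y \<le> k}"
    using cauchy_carrier[OF c] by auto
  then have "finite (\<eta> ` {n. d \<one> (\<eta> n) \<le> k})" using ball_fin finite_subset by blast
  then obtain g where g: "g \<in> \<eta> ` {n. d \<one> (\<eta> n) \<le> k}" and ginf: "infinite (\<eta> -` {g} \<inter> {n. d \<one> (\<eta> n) \<le> k})"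
    using inf_img_fin_dom'[OF _ inf] by blast
  have gc: "g \<in> carrier G" using g cauchy_carrier[OF c] by auto
  have "(\<lambda>n. fd \<one> (\<eta> n) g) \<longlonglongrightarrow> 0"
  proof (rule LIMSEQ_I)
    fix e :: real assume e: "0 < e"
    obtain N where N: "\<And>m n. m \<ge> N \<Longrightarrow> n \<ge> N \<Longrightarrow> fd \<one> (\<eta> m) (\<eta> n) < e"
      using c e unfolding floyd_cauchy_def by meson
    obtain m where m: "m \<ge> N" "m \<in> \<eta> -` {g} \<inter> {n. d \<one> (\<eta> n) \<le> k}"
      using ginf infinite_nat_iff_unbounded_le by blast
    show "\<exists>no. \<forall>n\<ge>no. norm (fd \<one> (\<eta> n) g - 0) < e"
    proof (intro exI[of _ N] allI impI)
      fix n assume "N \<le> n"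
      then have "fd \<one> (\<eta> n) g < e" using N[of n m] m by auto
      then show "norm (fd \<one> (\<eta> n) g - 0) < e"
        using fd_nonneg[OF cauchy_carrier[OF c] gc] by simp
    qed
  qed
  then show False using assms gc unfolding floyd_boundary_def by blast
qed

lemma ray_exists:
  assumes eta: "\<eta> \<in> floyd_boundary G S lam"
  shows "\<exists>\<alpha>. geod_to G S lam \<one> \<eta> \<alpha>"
proof -
  have c: "cauchy \<eta>" using eta bdry_cauchy by blast
  have \<eta>c: "\<eta> n \<in> carrier G" for n using cauchy_carrier[OF c] .
  define P where "P n = (SOME p. cay_walk G S p \<and> hd p = \<one> \<and> last p = \<eta> n \<and> length p = Suc (d \<one> (\<eta> n)))" for n
  have P: "cay_walk G S (P n) \<and> hd (P n) = \<one> \<and> last (P n) = \<eta> n \<and> length (P n) = Suc (d \<one> (\<eta> n))" for n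
    unfolding P_def by (rule someI_ex) (rule d_walk; simp add: \<eta>c)
  have Pc: "t < length (P n) \<Longrightarrow> P n ! t \<in> carrier G" for n t
    using P[of n] unfolding cay_walk_def by (auto dest: nth_mem)
  have Padj: "Suc t < length (P n) \<Longrightarrow> cay_adj G S (P n ! t) (P n ! Suc t)" for n t
    using P[of n] unfolding cay_walk_def by auto
  have Pd: "d \<one> (P n ! t) = t" if t: "t < length (P n)" for n t
  proof -
    have le: "d \<one> (P n ! t) \<le> t" using d_prefix[of "P n" t] P[of n] t by simp
    have w: "cay_walk G S (drop t (P n))" using walk_drop P t by blast
    have "d (P n ! t) (\<eta> n) < length (drop t (P n))"
      using d_le[OF w] t P[of n] by (simp add: hd_drop_conv_nth)
    then have "d (P n ! t) (\<eta> n) < Suc (d \<one> (\<eta> n)) - t" using P[of n] by simp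
    moreover have "d \<one> (\<eta> n) \<le> d \<one> (P n ! t) + d (P n ! t) (\<eta> n)"
      using d_tri[of \<one> "P n ! t" "\<eta> n"] Pc[OF t] \<eta>c by simp
    ultimately show ?thesis using le by linarith
  qed
  define I where "I k q = {n. k \<le> d \<one> (\<eta> n) \<and> take (Suc k) (P n) = q}" for k q
  define good where "good k q \<longleftrightarrow> length q = Suc k \<and> infinite (I k q)" for k q
  have good0: "good 0 [\<one>]"
  proof -
    have "take (Suc 0) (P n) = [\<one>]" for n
      using P[of n] by (cases "P n") (auto simp: cay_walk_def)
    then have "I 0 [\<one>] = UNIV" unfolding I_def by auto
    then show ?thesis unfolding good_def by simp
  qed
  have step: "\<exists>y. good (Suc k) (q @ [y])" if g: "good k q" for k q
  proof -
    let ?A = "I k q \<inter> {n. Suc k \<le> d \<one> (\<eta> n)}"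
    have "I k q \<subseteq> ?A \<union> {n. d \<one> (\<eta> n) \<le> k}" by auto
    moreover have "infinite (I k q)" using g unfolding good_def by simp
    ultimately have Ainf: "infinite ?A" using bdry_diverge[OF eta, of k]
      using finite_UnI finite_subset by metis
    define f where "f n = P n ! Suc k" for n
    have "f n \<in> Nbr (last q)" if n: "n \<in> ?A" for n
    proof -
      have len: "Suc k < length (P n)" using n P[of n] by simp
      have "last q = P n ! k" using n len unfolding I_def by (auto simp: take_Suc_conv_app_nth)
      then show ?thesis unfolding f_def using adj_Nbr[OF Padj[OF len]] by simp
    qed
    then have "f ` ?A \<subseteq> Nbr (last q)" by blast
    then have "finite (f ` ?A)" using finite_Nbr by (rule finite_subset)
    from inf_img_fin_dom'[OF this Ainf] obtain y where y: "infinite (f -` {y} \<inter> ?A)"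
      by blast
    have "f -` {y} \<inter> ?A \<subseteq> I (Suc k) (q @ [y])"
    proof
      fix n assume n: "n \<in> f -` {y} \<inter> ?A"
      have len: "Suc k < length (P n)" using n P[of n] by simp
      then have "take (Suc (Suc k)) (P n) = q @ [y]"
        using n unfolding I_def f_def by (simp add: take_Suc_conv_app_nth[OF len])
      then show "n \<in> I (Suc k) (q @ [y])" using n unfolding I_def by simp
    qed
    then have "infinite (I (Suc k) (q @ [y]))" using y infinite_super by blast
    then show ?thesis using g unfolding good_def by auto
  qed
  define Q where "Q = rec_nat [\<one>] (\<lambda>k q. q @ [SOME y. good (Suc k) (q @ [y])])"
  have Q0: "Q 0 = [\<one>]" unfolding Q_def by simp
  have QS: "Q (Suc k) = Q k @ [SOME y. good (Suc k) (Q k @ [y])]" for k unfolding Q_def by simp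
  have goodQ: "good k (Q k)" for k
  proof (induction k)
    case 0 then show ?case using Q0 good0 by simp
  next
    case (Suc k)
    show ?case unfolding QS by (rule someI_ex[OF step[OF Suc]])
  qed
  have lenQ: "length (Q k) = Suc k" for k using goodQ[of k] unfolding good_def by simp
  have Qpre: "i \<le> k \<Longrightarrow> Q k ! i = Q i ! i" for i k
  proof (induction k)
    case 0 then show ?case by simp
  next
    case (Suc k)
    show ?case
    proof (cases "i = Suc k")
      case False
      then have "i < length (Q k)" using Suc.prems lenQ[of k] by simp
      then show ?thesis using Suc False by (simp add: QS nth_append)
    qed simp
  qed
  define \<alpha> where "\<alpha> i = Q i ! i" for i
  have unb: "\<exists>n\<ge>N. k \<le> d \<one> (\<eta> n) \<and> take (Suc k) (P n) = Q k" for k N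
    using goodQ[of k] unfolding good_def I_def infinite_nat_iff_unbounded_le by blast
  have \<alpha>P: "P n ! i = \<alpha> i" if "k \<le> d \<one> (\<eta> n)" "take (Suc k) (P n) = Q k" "i \<le> k" for n i k
  proof -
    have "P n ! i = take (Suc k) (P n) ! i" using that(3) by simp
    also have "\<dots> = Q k ! i" using that(2) by simp
    also have "\<dots> = \<alpha> i" using Qpre[OF that(3)] unfolding \<alpha>_def by simp
    finally show ?thesis .
  qed
  have \<alpha>d1: "d \<one> (\<alpha> k) = k" and \<alpha>c: "\<alpha> k \<in> carrier G" for k
  proof -
    obtain n where n: "k \<le> d \<one> (\<eta> n)" "take (Suc k) (P n) = Q k" using unb by blast
    have len: "k < length (P n)" using n P[of n] by simp
    show "d \<one> (\<alpha> k) = k" using Pd[OF len] \<alpha>P[OF n, of k] by simp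
    show "\<alpha> k \<in> carrier G" using Pc[OF len] \<alpha>P[OF n, of k] by simp
  qed
  have \<alpha>dist: "d (\<alpha> i) (\<alpha> j) = j - i" if ij: "i \<le> j" for i j
  proof -
    obtain n where n: "j \<le> d \<one> (\<eta> n)" "take (Suc j) (P n) = Q j" using unb by blast
    have wQ: "cay_walk G S (Q j)" using walk_take[of G S "P n" "Suc j"] P[of n] n(2) by simp
    have w: "cay_walk G S (drop i (Q j))" using walk_drop[OF wQ] ij lenQ[of j] by simp
    have "hd (drop i (Q j)) = \<alpha> i" using ij lenQ[of j] Qpre[OF ij] unfolding \<alpha>_def
      by (simp add: hd_drop_conv_nth)
    moreover have "last (drop i (Q j)) = \<alpha> j" using ij lenQ[of j] unfolding \<alpha>_def
      by (simp add: last_conv_nth)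
    ultimately have "d (\<alpha> i) (\<alpha> j) < length (drop i (Q j))" using d_le[OF w] by blast
    then have "d (\<alpha> i) (\<alpha> j) \<le> j - i" using lenQ[of j] by simp
    moreover have "d \<one> (\<alpha> j) \<le> d \<one> (\<alpha> i) + d (\<alpha> i) (\<alpha> j)"
      using d_tri[of \<one> "\<alpha> i" "\<alpha> j"] \<alpha>c by simp
    ultimately show ?thesis using \<alpha>d1[of i] \<alpha>d1[of j] by linarith
  qed
  have ray: "geod_ray G S \<one> \<alpha>"
    unfolding geod_ray_def
  proof (intro conjI allI)
    show "\<alpha> 0 = \<one>" unfolding \<alpha>_def Q0 by simp
    show "\<alpha> i \<in> carrier G" for i by (rule \<alpha>c)
    fix i j
    show "real (d (\<alpha> i) (\<alpha> j)) = \<bar>real i - real j\<bar>"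
    proof (cases "i \<le> j")
      case True then show ?thesis using \<alpha>dist[OF True] by simp
    next
      case False
      then show ?thesis using \<alpha>dist[of j i] d_sym[OF \<alpha>c \<alpha>c, of i j] by simp
    qed
  qed
  have "(\<lambda>k. fd \<one> (\<alpha> k) (\<eta> k)) \<longlonglongrightarrow> 0"
  proof (rule LIMSEQ_I)
    fix e :: real assume e: "0 < e"
    obtain N where N: "\<And>m n. m \<ge> N \<Longrightarrow> n \<ge> N \<Longrightarrow> fd \<one> (\<eta> m) (\<eta> n) < e / 2"
      using c e unfolding floyd_cauchy_def by (meson half_gt_zero)
    obtain K where K: "lam ^ K < e / 2 * (1 - lam)"
      using real_arch_pow_inv[of "e / 2 * (1 - lam)" lam] e lam1 by auto
    show "\<exists>no. \<forall>k\<ge>no. norm (fd \<one> (\<alpha> k) (\<eta> k) - 0) < e"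
    proof (intro exI[of _ "max N K"] allI impI)
      fix k assume k: "max N K \<le> k"
      obtain n where n: "n \<ge> N" "k \<le> d \<one> (\<eta> n)" "take (Suc k) (P n) = Q k" using unb by blast
      have len: "k < length (P n)" using n P[of n] by simp
      have w: "cay_walk G S (drop k (P n))" using walk_drop P len by blast
      have "hd (drop k (P n)) = \<alpha> k" using len \<alpha>P[OF n(2,3), of k] by (simp add: hd_drop_conv_nth)
      moreover have "last (drop k (P n)) = \<eta> n" using len P[of n] by simp
      ultimately have "fd \<one> (\<alpha> k) (\<eta> n) \<le> fl \<one> (drop k (P n))" using fd_le[OF w] by blast
      also have "\<dots> \<le> lam ^ k / (1 - lam)"
        by (rule fl_geo[OF w]) (simp add: Pd)
      also have "\<dots> \<le> lam ^ K / (1 - lam)"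
        using k lam0 lam1 by (intro divide_right_mono power_decreasing) auto
      also have "\<dots> < e / 2" using K lam1 by (simp add: divide_less_eq)
      finally have a: "fd \<one> (\<alpha> k) (\<eta> n) < e / 2" .
      have b: "fd \<one> (\<eta> n) (\<eta> k) < e / 2" using N n k by simp
      have "fd \<one> (\<alpha> k) (\<eta> k) \<le> fd \<one> (\<alpha> k) (\<eta> n) + fd \<one> (\<eta> n) (\<eta> k)"
        using fd_tri \<alpha>c \<eta>c by blast
      moreover have "0 \<le> fd \<one> (\<alpha> k) (\<eta> k)" using fd_nonneg \<alpha>c \<eta>c by blast
      ultimately show "norm (fd \<one> (\<alpha> k) (\<eta> k) - 0) < e" using a b by simp
    qed
  qed
  then show ?thesis using ray unfolding geod_to_def by blast
qed

lemma karlsson: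
  assumes b: "geod_ray G S \<one> \<beta>" and vc: "v \<in> carrier G" and m: "\<And>t. m \<le> d v (\<beta> t)"
  shows "fd v \<one> (\<beta> n) \<le> sqrt lam ^ m * (2 / (sqrt lam * (1 - sqrt lam)))"
proof -
  define \<mu> where "\<mu> = sqrt lam"
  have mu: "0 < \<mu>" "\<mu> < 1" "\<mu> ^ 2 = lam" unfolding \<mu>_def using lam0 lam1 by auto
  define D where "D = d \<one> v"
  let ?p = "map (\<lambda>k. \<beta> (0 + k)) [0..<Suc n]"
  have w: "cay_walk G S ?p" by (rule ray_walk[OF b])
  have "fd v \<one> (\<beta> n) \<le> fl v ?p"
    using fd_le[OF w, of \<one> "\<beta> n" v] b unfolding geod_ray_def by (simp add: hd_map last_map del: upt_Suc)
  also have "\<dots> = (\<Sum>t<n. lam ^ min (d v (\<beta> t)) (d v (\<beta> (Suc t))))"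
    unfolding floyd_len_def by (intro sum.cong) (auto simp del: upt_Suc)
  also have "\<dots> \<le> (\<Sum>t<n. \<mu> ^ m * \<mu> ^ nat \<bar>int t - int D\<bar> / \<mu>)"
  proof (intro sum_mono)
    fix t assume "t \<in> {..<n}"
    define e where "e = min (d v (\<beta> t)) (d v (\<beta> (Suc t)))"
    have bc: "\<beta> t \<in> carrier G" "\<beta> (Suc t) \<in> carrier G" using ray_carrier[OF b] by auto
    have lo: "\<bar>int s - int D\<bar> \<le> int (d v (\<beta> s))" for s
    proof -
      have "d \<one> (\<beta> s) \<le> d \<one> v + d v (\<beta> s)" using d_tri[of \<one> v "\<beta> s"] vc ray_carrier[OF b] by simp
      moreover have "d \<one> v \<le> d \<one> (\<beta> s) + d (\<beta> s) v" using d_tri[of \<one> "\<beta> s" v] vc ray_carrier[OF b] by simp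
      moreover have "d (\<beta> s) v = d v (\<beta> s)" using d_sym vc ray_carrier[OF b] by metis
      ultimately show ?thesis using ray_d0[OF b, of s] unfolding D_def by linarith
    qed
    have "int m + \<bar>int t - int D\<bar> \<le> 2 * int e + 1"
      using lo[of t] lo[of "Suc t"] m[of t] m[of "Suc t"] unfolding e_def by linarith
    then have ex: "m + nat \<bar>int t - int D\<bar> \<le> 2 * e + 1" by linarith
    have "\<mu> ^ (2 * e + 1) \<le> \<mu> ^ (m + nat \<bar>int t - int D\<bar>)"
      using ex mu by (intro power_decreasing) auto
    then have "\<mu> * lam ^ e \<le> \<mu> ^ m * \<mu> ^ nat \<bar>int t - int D\<bar>"
      using mu(3) by (simp add: power_add power_mult)
    then have "lam ^ e * \<mu> \<le> \<mu> ^ m * \<mu> ^ nat \<bar>int t - int D\<bar>"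
      by (simp add: mult.commute)
    then show "lam ^ e \<le> \<mu> ^ m * \<mu> ^ nat \<bar>int t - int D\<bar> / \<mu>"
      using mu by (simp add: pos_le_divide_eq)
  qed
  also have "\<dots> = \<mu> ^ m / \<mu> * (\<Sum>t<n. \<mu> ^ nat \<bar>int t - int D\<bar>)"
    by (simp add: sum_distrib_left)
  also have "\<dots> \<le> \<mu> ^ m / \<mu> * (2 / (1 - \<mu>))"
    using abs_geo[OF mu(1,2)] mu by (intro mult_left_mono) auto
  also have "\<dots> = \<mu> ^ m * (2 / (\<mu> * (1 - \<mu>)))" by simp
  finally show ?thesis unfolding \<mu>_def .
qed

lemma cauchy_one: "cauchy (\<lambda>_. \<one>)"
  unfolding floyd_cauchy_def using fd_refl by simp

lemma part2:
  assumes \<kappa>: "0 < \<kappa>"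
  shows "\<exists>R>0. \<exists>C2>0. \<forall>\<xi> \<gamma> v.
            \<xi> \<in> floyd_boundary G S lam \<and> geod_to G S lam \<one> \<xi> \<gamma> \<and> v \<in> range \<gamma> \<and>
            floyd_dist_ext G S lam v (\<lambda>_. \<one>) \<xi> \<ge> \<kappa> \<longrightarrow>
            floyd_ball G S lam \<xi> (C2 * lam ^ d \<one> v) \<subseteq> shadow G S lam \<one> v R"
proof -
  define \<mu> where "\<mu> = sqrt lam"
  have mu: "0 < \<mu>" "\<mu> < 1" unfolding \<mu>_def using lam0 lam1 by auto
  define W where "W = 2 / (\<mu> * (1 - \<mu>))"
  have W: "0 < W" unfolding W_def using mu by simp
  obtain M where M: "\<mu> ^ M < \<kappa> / 2 / W" using real_arch_pow_inv[of "\<kappa> / 2 / W" \<mu>] \<kappa> W mu by auto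
  have MW: "\<mu> ^ M * W < \<kappa> / 2" using M W by (simp add: pos_less_divide_eq)
  show ?thesis
  proof (rule exI[of _ "real M + 1"], intro conjI exI[of _ "\<kappa> / 2"] allI impI subsetI)
    show "0 < real M + 1" by simp
    show "0 < \<kappa> / 2" using \<kappa> by simp
    fix \<xi> \<gamma> v \<eta>
    assume A: "\<xi> \<in> floyd_boundary G S lam \<and> geod_to G S lam \<one> \<xi> \<gamma> \<and> v \<in> range \<gamma> \<and>
            floyd_dist_ext G S lam v (\<lambda>_. \<one>) \<xi> \<ge> \<kappa>"
      and \<eta>: "\<eta> \<in> floyd_ball G S lam \<xi> (\<kappa> / 2 * lam ^ d \<one> v)"
    have eb: "\<eta> \<in> floyd_boundary G S lam" and eball: "floyd_dist_ext G S lam \<one> \<xi> \<eta> < \<kappa> / 2 * lam ^ d \<one> v"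
      using \<eta> unfolding floyd_ball_def by auto
    obtain j where vj: "v = \<gamma> j" using A by blast
    have g: "geod_ray G S \<one> \<gamma>" using A unfolding geod_to_def by blast
    have vc: "v \<in> carrier G" using vj ray_carrier[OF g] by simp
    have cx: "cauchy \<xi>" and ce: "cauchy \<eta>" using A eb bdry_cauchy by blast+
    have xc: "\<xi> n \<in> carrier G" "\<eta> n \<in> carrier G" for n using cx ce cauchy_carrier by blast+
    obtain \<alpha> where \<alpha>: "geod_to G S lam \<one> \<eta> \<alpha>" using ray_exists[OF eb] by blast
    have a: "geod_ray G S \<one> \<alpha>" and al: "(\<lambda>n. fd \<one> (\<alpha> n) (\<eta> n)) \<longlonglongrightarrow> 0"
      using \<alpha> unfolding geod_to_def by auto
    have ac: "\<alpha> n \<in> carrier G" for n using ray_carrier[OF a] .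
    have "\<exists>i. real (d (\<alpha> i) v) \<le> real M + 1"
    proof (rule ccontr)
      assume "\<not> ?thesis"
      then have "\<not> real (d (\<alpha> t) v) \<le> real M + 1" for t by blast
      then have "real M \<le> real (d (\<alpha> t) v)" for t by (meson le_add_same_cancel1 linorder_not_le order.trans zero_le_one order_less_imp_le)
      then have "M \<le> d (\<alpha> t) v" for t by simp
      then have far: "M \<le> d v (\<alpha> t)" for t using d_sym[OF vc ac[of t]] by simp
      define K where "K = lam ^ d \<one> v"
      have K: "0 < K" unfolding K_def using lam0 by simp
      have base: "fd v x y \<le> fd \<one> x y / K" if "x \<in> carrier G" "y \<in> carrier G" for x y
        using fd_base[OF _ vc that] K unfolding K_def by (simp add: pos_le_divide_eq mult.commute)
      let ?a = "\<lambda>n. fd v \<one> (\<xi> n)"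
      let ?b = "\<lambda>n. fd \<one> (\<xi> n) (\<eta> n)"
      obtain LA where LA: "?a \<longlonglongrightarrow> LA" using fd_conv[OF cauchy_one cx vc] by (auto simp: convergent_def)
      obtain LB where LB: "?b \<longlonglongrightarrow> LB" using fd_conv[OF cx ce] by (auto simp: convergent_def)
      have "LA = floyd_dist_ext G S lam v (\<lambda>_. \<one>) \<xi>" unfolding floyd_dist_ext_def using limI[OF LA] by simp
      then have LAk: "\<kappa> \<le> LA" using A by simp
      have "LB = floyd_dist_ext G S lam \<one> \<xi> \<eta>" unfolding floyd_dist_ext_def using limI[OF LB] by simp
      then have LBk: "LB < \<kappa> / 2 * K" using eball unfolding K_def by simp
      let ?c = "\<lambda>n. \<mu> ^ M * W + fd \<one> (\<alpha> n) (\<eta> n) / K + fd \<one> (\<xi> n) (\<eta> n) / K"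
      have lc: "?c \<longlonglongrightarrow> \<mu> ^ M * W + 0 / K + LB / K" by (intro tendsto_intros al LB) (use K in auto)
      have "?a n \<le> ?c n" for n
      proof -
        have "?a n \<le> fd v \<one> (\<alpha> n) + fd v (\<alpha> n) (\<eta> n) + fd v (\<eta> n) (\<xi> n)"
          using fd_tri[of \<one> "\<alpha> n" "\<xi> n" v] fd_tri[of "\<alpha> n" "\<eta> n" "\<xi> n" v] ac xc by simp
        moreover have "fd v \<one> (\<alpha> n) \<le> \<mu> ^ M * W"
          using karlsson[OF a vc far] unfolding \<mu>_def W_def by simp
        moreover have "fd v (\<alpha> n) (\<eta> n) \<le> fd \<one> (\<alpha> n) (\<eta> n) / K" using base ac xc by blast
        moreover have "fd v (\<eta> n) (\<xi> n) \<le> fd \<one> (\<xi> n) (\<eta> n) / K"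
          using base[of "\<xi> n" "\<eta> n"] fd_sym[of "\<xi> n" "\<eta> n" v] xc by simp
        ultimately show ?thesis by linarith
      qed
      then have "LA \<le> \<mu> ^ M * W + 0 / K + LB / K" by (intro LIMSEQ_le[OF LA lc]) blast
      moreover have "LB / K < \<kappa> / 2" using LBk K by (simp add: divide_less_eq)
      ultimately show False using MW LAk by simp
    qed
    then show "\<eta> \<in> shadow G S lam \<one> v (real M + 1)"
      unfolding shadow_def using eb \<alpha> by blast
  qed
qed


end

theorem lemma8p12:
  fixes G (structure) and S :: "'a set" and lam :: real
  assumes "group G" and "finite S" and "S \<subseteq> carrier G" and "generate G S = carrier G"
    and "0 < lam" and "lam < 1"
  shows "(\<forall>R>0. \<exists>C1>0. \<forall>\<xi> \<gamma> v.
            \<xi> \<in> floyd_boundary G S lam \<and> geod_to G S lam \<one> \<xi> \<gamma> \<and> v \<in> range \<gamma> \<longrightarrow>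
            shadow G S lam \<one> v R \<subseteq> floyd_ball G S lam \<xi> (C1 * lam ^ word_dist G S \<one> v))
       \<and> (\<forall>\<kappa>>0. \<exists>R>0. \<exists>C2>0. \<forall>\<xi> \<gamma> v.
            \<xi> \<in> floyd_boundary G S lam \<and> geod_to G S lam \<one> \<xi> \<gamma> \<and> v \<in> range \<gamma> \<and>
            floyd_dist_ext G S lam v (\<lambda>_. \<one>) \<xi> \<ge> \<kappa> \<longrightarrow>
            floyd_ball G S lam \<xi> (C2 * lam ^ word_dist G S \<one> v) \<subseteq> shadow G S lam \<one> v R)"
proof -
  interpret fl G S lam unfolding fl_def using assms by blast
  show ?thesis using part1 part2 by blast
qed

end
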